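(* Let $n\ge 2$, $q\ge 2$ be integers and let $S\subseteq\bigcup_{i=2}^n\mathbb{Z}_q^i$ be a $q$-ary (variable-length) non-overlapping code with all codeword lengths at most $n$. Let $C(n,q)$ denote the maximum size of a fixed-length $q$-ary non-overlapping code $S'\subseteq\mathbb{Z}_q^n$. Then $|S|\le C(n,q)$.
   Context: $\mathbb{Z}_q=\{0,1,\dots,q-1\}$; words are finite strings over $\mathbb{Z}_q$, $|\mathbf{s}|$ denotes the length of $\mathbf{s}$. For $\mathbf{s}=(s_1,\dots,s_m)$, $\mathrm{pre}(\mathbf{s})=\{(s_1,\dots,s_k):1\le k\le m-1\}$ and $\mathrm{suf}(\mathbf{s})=\{(s_{m-k+1},\dots,s_m):1\le k\le m-1\}$ are the sets of nontrivial prefixes and suffixes. A code $S\subseteq\bigcup_{i=2}^n\mathbb{Z}_q^i$ is non-overlapping if (1) for all $\mathbf{u},\mathbf{v}\in S$ (possibly equal), $\mathrm{pre}(\mathbf{u})\cap\mathrm{suf}(\mathbf{v})=\emptyset$, and (2) for all distinct $\mathbf{u},\mathbf{v}\in S$ with $|\mathbf{u}|\le|\mathbf{v}|$, $\mathbf{u}$ is not a (contiguous) subword of $\mathbf{v}$. A fixed-length code of length $n$ is a subset of $\mathbb{Z}_q^n$ (for it condition (2) is automatic). *)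

theory Defs
  imports Main "HOL-Library.Sublist"
begin

definition qwords :: "nat \<Rightarrow> nat \<Rightarrow> nat list set" where
  "qwords q i = {s. length s = i \<and> (\<forall>x\<in>set s. x < q)}"

definition pre :: "'a list \<Rightarrow> 'a list set" where
  "pre s = {take k s | k. 1 \<le> k \<and> k \<le> length s - 1}"

definition suf :: "'a list \<Rightarrow> 'a list set" where
  "suf s = {drop (length s - k) s | k. 1 \<le> k \<and> k \<le> length s - 1}"

definition non_overlapping :: "'a list set \<Rightarrow> bool" where
  "non_overlapping S \<longleftrightarrow>
     (\<forall>u\<in>S. \<forall>v\<in>S. pre u \<inter> suf v = {}) \<and>
     (\<forall>u\<in>S. \<forall>v\<in>S. u \<noteq> v \<and> length u \<le> length v \<longrightarrow> \<not> sublist u v)"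

definition C :: "nat \<Rightarrow> nat \<Rightarrow> nat" where
  "C n q = Max {card S' | S'. S' \<subseteq> qwords q n \<and> non_overlapping S'}"

end

theory Submission
  imports Defs
begin

lemma pre_iff: "w \<in> pre u \<longleftrightarrow> w \<noteq> [] \<and> prefix w u \<and> length w < length u"
proof
  assume "w \<in> pre u"
  then obtain k where "w = take k u" "1 \<le> k" "k \<le> length u - 1" unfolding pre_def by auto
  then show "w \<noteq> [] \<and> prefix w u \<and> length w < length u"
    by (auto simp: take_is_prefix)
next
  assume a: "w \<noteq> [] \<and> prefix w u \<and> length w < length u"
  then have "w = take (length w) u" by (metis append_eq_conv_conj prefix_def)
  moreover have "1 \<le> length w" "length w \<le> length u - 1" using a by (auto simp: Suc_le_eq)
  ultimately show "w \<in> pre u" unfolding pre_def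
    by (intro CollectI exI[of _ "length w"]) simp
qed

lemma suf_iff: "w \<in> suf u \<longleftrightarrow> w \<noteq> [] \<and> suffix w u \<and> length w < length u"
proof
  assume "w \<in> suf u"
  then obtain k where "w = drop (length u - k) u" "1 \<le> k" "k \<le> length u - 1" unfolding suf_def by auto
  then show "w \<noteq> [] \<and> suffix w u \<and> length w < length u"
    by (auto simp: suffix_drop)
next
  assume a: "w \<noteq> [] \<and> suffix w u \<and> length w < length u"
  then have "w = drop (length u - length w) u" using diff_diff_cancel suffixE suffix_drop by fastforce
  moreover have "1 \<le> length w" "length w \<le> length u - 1" using a by (auto simp: Suc_le_eq)
  ultimately show "w \<in> suf u" unfolding suf_def
    by (intro CollectI exI[of _ "length w"]) simp
qed

lemma sublist_same_len:
  assumes "sublist u v" "length u \<ge> length v" shows "u = v"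
proof -
  obtain ps ss where v: "v = ps @ u @ ss" using assms(1) unfolding sublist_def by blast
  then have "ps = [] \<and> ss = []" using assms(2) by simp
  then show ?thesis using v by simp
qed

lemma suffix_len: "suffix x z \<Longrightarrow> suffix y z \<Longrightarrow> length x \<le> length y \<Longrightarrow> suffix x y"
  by (rule suffix_length_suffix)

lemma prefix_take_eq: "prefix w xs \<Longrightarrow> w = take (length w) xs"
  by (auto simp: prefix_def)

lemma key:
  fixes a b w :: "nat list" and n :: nat
  assumes A: "\<And>x y z. x \<in> S \<Longrightarrow> y \<in> S \<Longrightarrow> z \<noteq> [] \<Longrightarrow> prefix z x \<Longrightarrow> suffix z y
      \<Longrightarrow> length z < length x \<Longrightarrow> length z < length y \<Longrightarrow> False"
    and B: "\<And>x y. x \<in> S \<Longrightarrow> y \<in> S \<Longrightarrow> sublist x y \<Longrightarrow> x = y"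
    and L: "\<And>x. x \<in> S \<Longrightarrow> 2 \<le> length x \<and> length x \<le> n"
    and a: "a \<in> S" and b: "b \<in> S"
    and w: "w \<noteq> []" "prefix w (replicate (n - length a) (hd a) @ a)"
       "suffix w (replicate (n - length b) (hd b) @ b)" "length w < n"
  shows False
proof -
  define p where "p = n - length a"
  have la: "2 \<le> length a" "length a \<le> n" using L a by auto
  have lb: "2 \<le> length b" "length b \<le> n" using L b by auto
  have lastw: "last w = last b"
  proof -
    obtain zs where zs: "replicate (n - length b) (hd b) @ b = zs @ w" using w(3) unfolding suffix_def by blast
    have "b \<noteq> []" using lb by auto
    then have "last (replicate (n - length b) (hd b) @ b) = last b" by simp
    moreover have "last (zs @ w) = last w" using w(1) by simp
    ultimately show ?thesis using zs by simp
  qed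
  show False
  proof (cases "length w \<le> p")
    case True
    then have "w = replicate (length w) (hd a)"
    proof -
      have "w = take (length w) (replicate p (hd a) @ a)" using prefix_take_eq[OF w(2)] unfolding p_def .
      also have "\<dots> = replicate (length w) (hd a)" using True by simp
      finally show ?thesis .
    qed
    then have rw: "replicate (length w) (hd a) = w" by (rule sym)
    have "length w \<noteq> 0" using w(1) by simp
    then have "last (replicate (length w) (hd a)) = hd a" by simp
    then have "last w = hd a" by (simp only: rw)
    then have "hd a = last b" using lastw by simp
    moreover have "prefix [hd a] a" using la by (cases a) auto
    moreover have "suffix [last b] b" using lb
    proof -
      have "b \<noteq> []" using lb by auto
      then have "b = butlast b @ [last b]" by simp
      then show ?thesis unfolding suffix_def by blast
    qed
    ultimately show False using A[OF a b, of "[hd a]"] la lb by auto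
  next
    case False
    define j where "j = length w - p"
    have j: "1 \<le> j" "j < length a" using False la w(4) unfolding j_def p_def by auto
    have wsplit: "w = replicate p (hd a) @ take j a"
    proof -
      have "w = take (length w) (replicate p (hd a) @ a)" using prefix_take_eq[OF w(2)] unfolding p_def .
      also have "\<dots> = replicate p (hd a) @ take j a" using False unfolding j_def by simp
      finally show ?thesis .
    qed
    have sw: "suffix (take j a) w" using wsplit by (simp add: suffix_def)
    then have sy: "suffix (take j a) (replicate (n - length b) (hd b) @ b)" using w(3) suffix_order.trans by blast
    have pa: "prefix (take j a) a" by (simp add: take_is_prefix)
    have lt: "length (take j a) = j" using j by simp
    show False
    proof (cases "j < length b")
      case True
      have "suffix b (replicate (n - length b) (hd b) @ b)" by (auto simp: suffix_def)
      moreover have "length (take j a) \<le> length b" using True lt by simp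
      ultimately have "suffix (take j a) b" using sy suffix_len by blast
      moreover have "take j a \<noteq> []" using j la by auto
      ultimately show False using A[OF a b _ pa] j True lt by auto
    next
      case False
      have "suffix b (replicate (n - length b) (hd b) @ b)" by (auto simp: suffix_def)
      moreover have "length b \<le> length (take j a)" using False lt by simp
      ultimately have "suffix b (take j a)" using sy suffix_len by blast
      then have "sublist b a" using pa
        by (rule sublist_order.order_trans[OF suffix_imp_sublist prefix_imp_sublist])
      then have "b = a" using B[OF b a] by simp
      then show False using False j by simp
    qed
  qed
qed


theorem mainTheorem3:
  fixes n q :: nat and S :: "nat list set"
  assumes "n \<ge> 2" and "q \<ge> 2"
    and "S \<subseteq> (\<Union>i\<in>{2..n}. qwords q i)"
    and "non_overlapping S"
  shows "card S \<le> C n q"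
proof -
  define f where "f u = replicate (n - length u) (hd u) @ u" for u :: "nat list"
  have L: "\<And>x. x \<in> S \<Longrightarrow> 2 \<le> length x \<and> length x \<le> n"
    using assms(3) unfolding qwords_def by auto
  have E: "\<And>x. x \<in> S \<Longrightarrow> \<forall>y\<in>set x. y < q"
    using assms(3) unfolding qwords_def by auto
  have A: "\<And>x y z. x \<in> S \<Longrightarrow> y \<in> S \<Longrightarrow> z \<noteq> [] \<Longrightarrow> prefix z x \<Longrightarrow> suffix z y
      \<Longrightarrow> length z < length x \<Longrightarrow> length z < length y \<Longrightarrow> False"
  proof -
    fix x y z assume h: "x \<in> S" "y \<in> S" "z \<noteq> []" "prefix z x" "suffix z y"
      "length z < length x" "length z < length y"
    then have "z \<in> pre x \<inter> suf y" by (simp add: pre_iff suf_iff)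
    then show False using assms(4) h(1,2) unfolding non_overlapping_def by blast
  qed
  have B: "\<And>x y. x \<in> S \<Longrightarrow> y \<in> S \<Longrightarrow> sublist x y \<Longrightarrow> x = y"
    using assms(4) sublist_length_le unfolding non_overlapping_def by blast
  have lenf: "\<And>x. x \<in> S \<Longrightarrow> length (f x) = n" using L unfolding f_def by auto
  have inj: "inj_on f S"
  proof (rule inj_onI)
    have one: "a = b" if "a \<in> S" "b \<in> S" "f a = f b" "length a \<le> length b" for a b
    proof -
      have "suffix b (f a)" using that(3) unfolding f_def by (simp add: suffix_appendI)
      moreover have "suffix a (f a)" unfolding f_def by (auto simp: suffix_def)
      ultimately have "suffix a b" using that(4) suffix_len by blast
      then show "a = b" using B that(1,2) suffix_imp_sublist by blast
    qed
    fix a b assume "a \<in> S" "b \<in> S" "f a = f b"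
    then show "a = b" using one[of a b] one[of b a] by (cases "length a \<le> length b") auto
  qed
  have sub: "f ` S \<subseteq> qwords q n"
  proof
    fix y assume "y \<in> f ` S"
    then obtain x where x: "x \<in> S" "y = f x" by auto
    have "x \<noteq> []" using L[OF x(1)] by auto
    then have "hd x \<in> set x" by simp
    then show "y \<in> qwords q n" using x E[OF x(1)] lenf[OF x(1)] unfolding qwords_def f_def by auto
  qed
  have no: "non_overlapping (f ` S)"
    unfolding non_overlapping_def
  proof (intro conjI ballI impI)
    fix u v assume uv: "u \<in> f ` S" "v \<in> f ` S"
    then obtain a b where ab: "a \<in> S" "b \<in> S" "u = f a" "v = f b" by auto
    show "pre u \<inter> suf v = {}"
    proof (rule ccontr)
      assume "pre u \<inter> suf v \<noteq> {}"
      then obtain w where "w \<in> pre u" "w \<in> suf v" by auto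
      then have w: "w \<noteq> []" "prefix w (f a)" "suffix w (f b)" "length w < n"
        using ab lenf by (auto simp: pre_iff suf_iff)
      show False
        by (rule key[where S=S and n=n and a=a and b=b and w=w, OF A B L ab(1) ab(2) w(1)
              w(2)[unfolded f_def] w(3)[unfolded f_def] w(4)])
    qed
  next
    fix u v assume uv: "u \<in> f ` S" "v \<in> f ` S" "u \<noteq> v \<and> length u \<le> length v"
    then obtain a b where ab: "a \<in> S" "b \<in> S" "u = f a" "v = f b" by auto
    have "length u = length v" using ab lenf by simp
    then show "\<not> sublist u v" using uv(3) sublist_same_len[of u v] by auto
  qed
  have fin: "finite (qwords q n)"
  proof -
    have "qwords q n \<subseteq> {xs. set xs \<subseteq> {..<q} \<and> length xs = n}" unfolding qwords_def by auto
    moreover have "finite {xs. set xs \<subseteq> {..<q} \<and> length xs = n}"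
      by (rule finite_lists_length_eq) simp
    ultimately show ?thesis by (rule finite_subset)
  qed
  have finC: "finite {card S' | S'. S' \<subseteq> qwords q n \<and> non_overlapping S'}"
  proof -
    have "{card S' | S'. S' \<subseteq> qwords q n \<and> non_overlapping S'} \<subseteq> card ` Pow (qwords q n)" by auto
    then show ?thesis using fin by (meson finite_Pow_iff finite_imageI finite_subset)
  qed
  have "card S = card (f ` S)" using inj by (simp add: card_image)
  also have "\<dots> \<le> C n q" unfolding C_def
  proof (rule Max_ge[OF finC])
    show "card (f ` S) \<in> {card S' | S'. S' \<subseteq> qwords q n \<and> non_overlapping S'}"
      using sub no by (intro CollectI exI[of _ "f ` S"]) simp
  qed
  finally show ?thesis .
qed

end
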